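(* Let $\varphi\colon E\to E$ be the homomorphism with $\varphi(e_1)=-e_1$ and $\varphi(e_n)=-e_n+2e_1e_n$ for $n>1$. Then $\varphi$ is an automorphism of order 2, and $E_\varphi$ is $\mathbb{Z}_2$-isomorphic to $E_{can}$.
   Context: $F$ is a field of characteristic zero, $L$ an infinite-dimensional $F$-vector space with basis $e_1,e_2,\ldots$, $E$ its Grassmann algebra. $E_\varphi$ is the $\mathbb{Z}_2$-grading on $E$ by eigenspaces of $\varphi$ for $1$ (degree 0) and $-1$ (degree 1). $E_{can}=E_{(0)}\oplus E_{(1)}$ is the natural grading: $E_{(0)}$ spanned by $1$ and monomials of even length, $E_{(1)}$ by monomials of odd length. $\mathbb{Z}_2$-isomorphic means isomorphic via an algebra isomorphism preserving degree components. *)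

theory Defs
  imports Main
begin

text \<open>Grassmann algebra E over a field F (type 'a) on generators e_1, e_2, ... (indices n \<ge> 1).
An element is a finitely supported coefficient function on the monomial basis
e_S = e_{i1} ... e_{ik} (i1 < ... < ik), S a finite set of positive naturals.\<close>

definition grass :: "(nat set \<Rightarrow> 'a::field) set" where
  "grass = {f. finite {S. f S \<noteq> 0} \<and> (\<forall>S. f S \<noteq> 0 \<longrightarrow> finite S \<and> 0 \<notin> S)}"

definition gadd :: "(nat set \<Rightarrow> 'a::field) \<Rightarrow> (nat set \<Rightarrow> 'a) \<Rightarrow> (nat set \<Rightarrow> 'a)" where
  "gadd f g = (\<lambda>S. f S + g S)"

definition gneg :: "(nat set \<Rightarrow> 'a::field) \<Rightarrow> (nat set \<Rightarrow> 'a)" where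
  "gneg f = (\<lambda>S. - f S)"

definition gscale :: "'a::field \<Rightarrow> (nat set \<Rightarrow> 'a) \<Rightarrow> (nat set \<Rightarrow> 'a)" where
  "gscale c f = (\<lambda>S. c * f S)"

text \<open>Sign of e_S e_T = sign * e_{S \<union> T} for disjoint S, T: (-1)^(number of inversions).\<close>
definition gsign :: "nat set \<Rightarrow> nat set \<Rightarrow> 'a::field" where
  "gsign S T = (- 1) ^ card {(s, t). s \<in> S \<and> t \<in> T \<and> t < s}"

definition gmult :: "(nat set \<Rightarrow> 'a::field) \<Rightarrow> (nat set \<Rightarrow> 'a) \<Rightarrow> (nat set \<Rightarrow> 'a)" where
  "gmult f g = (\<lambda>U. \<Sum>(S, T) \<in> {(S, T). f S \<noteq> 0 \<and> g T \<noteq> 0}.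
      (if S \<inter> T = {} \<and> S \<union> T = U then gsign S T * f S * g T else 0))"

definition gone :: "nat set \<Rightarrow> 'a::field" where
  "gone = (\<lambda>S. if S = {} then 1 else 0)"

definition gen :: "nat \<Rightarrow> nat set \<Rightarrow> 'a::field" where
  "gen n = (\<lambda>S. if S = {n} then 1 else 0)"

definition grass_hom :: "((nat set \<Rightarrow> 'a::field) \<Rightarrow> (nat set \<Rightarrow> 'a)) \<Rightarrow> bool" where
  "grass_hom \<phi> \<longleftrightarrow> (\<forall>f\<in>grass. \<phi> f \<in> grass) \<and>
     (\<forall>f\<in>grass. \<forall>g\<in>grass. \<phi> (gadd f g) = gadd (\<phi> f) (\<phi> g)) \<and>
     (\<forall>c. \<forall>f\<in>grass. \<phi> (gscale c f) = gscale c (\<phi> f)) \<and>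
     (\<forall>f\<in>grass. \<forall>g\<in>grass. \<phi> (gmult f g) = gmult (\<phi> f) (\<phi> g)) \<and>
     \<phi> gone = gone"

definition Ecan0 :: "(nat set \<Rightarrow> 'a::field) set" where
  "Ecan0 = {f \<in> grass. \<forall>S. f S \<noteq> 0 \<longrightarrow> even (card S)}"

definition Ecan1 :: "(nat set \<Rightarrow> 'a::field) set" where
  "Ecan1 = {f \<in> grass. \<forall>S. f S \<noteq> 0 \<longrightarrow> odd (card S)}"

definition Ephi0 :: "((nat set \<Rightarrow> 'a::field) \<Rightarrow> (nat set \<Rightarrow> 'a)) \<Rightarrow> (nat set \<Rightarrow> 'a) set" where
  "Ephi0 \<phi> = {f \<in> grass. \<phi> f = f}"

definition Ephi1 :: "((nat set \<Rightarrow> 'a::field) \<Rightarrow> (nat set \<Rightarrow> 'a)) \<Rightarrow> (nat set \<Rightarrow> 'a) set" where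
  "Ephi1 \<phi> = {f \<in> grass. \<phi> f = gneg f}"

end

theory Submission
  imports Defs
begin

lemma grassD: "f \<in> grass \<Longrightarrow> f S \<noteq> 0 \<Longrightarrow> finite S \<and> 0 \<notin> S"
  by (auto simp: grass_def)

lemma grass_fin: "f \<in> grass \<Longrightarrow> finite {S. f S \<noteq> 0}"
  by (auto simp: grass_def)

lemma Un_Diff_disj: "a \<inter> b = {} \<Longrightarrow> a \<union> b - a = b" by blast

lemma gmult_pw:
  assumes f: "f \<in> grass" and g: "g \<in> grass"
  shows "gmult f g U = (\<Sum>S\<in>Pow U. gsign S (U - S) * f S * g (U - S))"
proof -
  let ?P = "{(S, T). f S \<noteq> 0 \<and> g T \<noteq> 0}"
  have finP: "finite ?P"
    by (rule finite_subset[of _ "{S. f S \<noteq> 0} \<times> {T. g T \<noteq> 0}"])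
       (auto simp: grass_fin[OF f] grass_fin[OF g])
  let ?R = "{S. S \<subseteq> U \<and> f S \<noteq> 0 \<and> g (U - S) \<noteq> 0}"
  have "gmult f g U = (\<Sum>p\<in>?P. if fst p \<inter> snd p = {} \<and> fst p \<union> snd p = U
        then gsign (fst p) (snd p) * f (fst p) * g (snd p) else 0)"
    unfolding gmult_def by (rule sum.cong[OF refl]) (simp split: prod.split)
  also have "\<dots> = (\<Sum>p\<in>{p\<in>?P. fst p \<inter> snd p = {} \<and> fst p \<union> snd p = U}.
        gsign (fst p) (snd p) * f (fst p) * g (snd p))"
    by (rule sum.inter_filter[symmetric, OF finP])
  also have "\<dots> = (\<Sum>S\<in>?R. gsign S (U - S) * f S * g (U - S))"
    by (rule sum.reindex_bij_witness[where i = "\<lambda>S. (S, U - S)" and j = fst]) (auto simp: Un_Diff_disj)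
  also have "\<dots> = (\<Sum>S\<in>Pow U. gsign S (U - S) * f S * g (U - S))"
  proof (cases "finite U")
    case True
    show ?thesis by (rule sum.mono_neutral_left) (use True in auto)
  next
    case False
    have "?R = {}"
    proof (rule ccontr)
      assume "?R \<noteq> {}"
      then obtain S where "S \<subseteq> U" "f S \<noteq> 0" "g (U - S) \<noteq> 0" by auto
      then have "finite S" "finite (U - S)" using grassD[OF f] grassD[OF g] by auto
      with \<open>S \<subseteq> U\<close> False show False
        by (metis Diff_partition finite_UnI)
    qed
    moreover have inf: "infinite (Pow U)" using False by simp
    ultimately show ?thesis by (simp only: sum.empty sum.infinite[OF inf])
  qed
  finally show ?thesis .
qed

lemma sum_Pow_split:
  assumes "finite D" "(1::nat) \<notin> D"
  shows "(\<Sum>S\<in>Pow (insert 1 D). F S) = (\<Sum>S\<in>Pow D. F S + F (insert 1 S))"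
proof -
  have inj: "inj_on (insert 1) (Pow D)" using assms(2) by (auto simp: inj_on_def) (metis insert_absorb insert_ident subsetD)+
  have "(\<Sum>S\<in>Pow (insert 1 D). F S) = (\<Sum>S\<in>Pow D \<union> insert 1 ` Pow D. F S)"
    by (simp add: Pow_insert)
  also have "\<dots> = (\<Sum>S\<in>Pow D. F S) + (\<Sum>S\<in>insert 1 ` Pow D. F S)"
    by (rule sum.union_disjoint) (use assms in auto)
  also have "(\<Sum>S\<in>insert 1 ` Pow D. F S) = (\<Sum>S\<in>Pow D. F (insert 1 S))"
    using sum.reindex[OF inj, of F] by (simp add: comp_def)
  finally show ?thesis by (simp add: sum.distrib)
qed

lemma gsign_ins1_left:
  assumes "(0::nat) \<notin> T"
  shows "(gsign (insert 1 S) T :: 'a::field) = gsign S T"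
proof -
  have "{(s, t). s \<in> insert 1 S \<and> t \<in> T \<and> t < s} = {(s, t). s \<in> S \<and> t \<in> T \<and> t < s}"
    using assms by auto
  then show ?thesis by (simp add: gsign_def)
qed

lemma finite_inv: "finite S \<Longrightarrow> finite {(s, t). s \<in> S \<and> t \<in> T \<and> t < (s::nat)}"
  by (rule finite_subset[of _ "S \<times> {..<Max S}"]) (auto intro: less_le_trans[OF _ Max_ge])

lemma gsign_ins1_right:
  assumes "finite S" "(0::nat) \<notin> S" "1 \<notin> S" "1 \<notin> T"
  shows "(gsign S (insert 1 T) :: 'a::field) = (-1) ^ card S * gsign S T"
proof -
  have split: "{(s, t). s \<in> S \<and> t \<in> insert 1 T \<and> t < s} = {(s, t). s \<in> S \<and> t \<in> T \<and> t < s} \<union> (\<lambda>s. (s, 1)) ` S"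
    using assms(2,3) by auto (metis One_nat_def less_one linorder_neqE_nat)
  have "card ({(s, t). s \<in> S \<and> t \<in> T \<and> t < s} \<union> (\<lambda>s. (s, 1::nat)) ` S)
      = card {(s, t). s \<in> S \<and> t \<in> T \<and> t < s} + card ((\<lambda>s. (s, 1::nat)) ` S)"
    by (rule card_Un_disjoint) (use assms finite_inv in auto)
  also have "card ((\<lambda>s. (s, 1::nat)) ` S) = card S" by (simp add: card_image inj_on_def)
  finally show ?thesis unfolding gsign_def split by (simp add: power_add mult.commute)
qed

definition psi :: "'a::field \<Rightarrow> (nat set \<Rightarrow> 'a) \<Rightarrow> nat set \<Rightarrow> 'a" where
  "psi c f = (\<lambda>U. f U + (if 1 \<in> U \<and> finite U \<and> even (card U) then c * f (U - {1}) else 0))"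

lemma psi_grass:
  assumes f: "f \<in> grass" shows "psi c f \<in> grass"
proof -
  have sub: "{U. psi c f U \<noteq> 0} \<subseteq> {S. f S \<noteq> 0} \<union> insert 1 ` {S. f S \<noteq> 0}"
  proof
    fix U assume "U \<in> {U. psi c f U \<noteq> 0}"
    then have "f U \<noteq> 0 \<or> (1 \<in> U \<and> f (U - {1}) \<noteq> 0)"
      by (auto simp: psi_def split: if_splits)
    then show "U \<in> {S. f S \<noteq> 0} \<union> insert 1 ` {S. f S \<noteq> 0}"
      by (auto simp: image_iff)
  qed
  have fin: "finite {U. psi c f U \<noteq> 0}"
    by (rule finite_subset[OF sub]) (simp add: grass_fin[OF f])
  have "finite U \<and> 0 \<notin> U" if "psi c f U \<noteq> 0" for U
  proof -
    from that have "f U \<noteq> 0 \<or> (1 \<in> U \<and> f (U - {1}) \<noteq> 0)"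
      by (auto simp: psi_def split: if_splits)
    then show ?thesis
    proof
      assume "f U \<noteq> 0" then show ?thesis using grassD[OF f] by blast
    next
      assume "1 \<in> U \<and> f (U - {1}) \<noteq> 0"
      then have "finite (U - {1}) \<and> 0 \<notin> U - {1}" using grassD[OF f] by blast
      then show ?thesis by auto
    qed
  qed
  with fin show ?thesis by (auto simp: grass_def)
qed

lemma psi_mult:
  assumes f: "f \<in> grass" and g: "g \<in> grass"
  shows "psi c (gmult f g) = gmult (psi c f) (psi c g)"
proof
  fix U
  have pf: "psi c f \<in> grass" and pg: "psi c g \<in> grass" using psi_grass f g by auto
  show "psi c (gmult f g) U = gmult (psi c f) (psi c g) U"
  proof (cases "finite U \<and> 1 \<in> U")
    case False
    show ?thesis
    proof (cases "finite U")
      case False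
      then have inf: "infinite (Pow U)" by simp
      have "gmult (psi c f) (psi c g) U = 0" by (simp only: gmult_pw[OF pf pg] sum.infinite[OF inf])
      moreover have "psi c (gmult f g) U = 0" using False
        by (simp add: psi_def gmult_pw[OF f g] sum.infinite[OF inf])
      ultimately show ?thesis by simp
    next
      case True
      with \<open>\<not> (finite U \<and> 1 \<in> U)\<close> have n1: "1 \<notin> U" by simp
      have r: "gmult (psi c f) (psi c g) U = (\<Sum>S\<in>Pow U. gsign S (U - S) * f S * g (U - S))"
        unfolding gmult_pw[OF pf pg]
        by (rule sum.cong[OF refl]) (use n1 in \<open>auto simp: psi_def\<close>)
      have "psi c (gmult f g) U = gmult f g U" using n1 by (simp add: psi_def)
      then show ?thesis using r gmult_pw[OF f g] by simp
    qed
  next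
    case True
    define D where "D = U - {1}"
    have UD: "U = insert 1 D" and finD: "finite D" and n1: "1 \<notin> D"
      using True by (auto simp: D_def)
    have cardU: "card U = Suc (card D)" using UD finD n1 by simp
    define F where "F = (\<lambda>S. gsign S (U - S) * f S * g (U - S))"
    define G where "G = (\<lambda>S. gsign S (U - S) * psi c f S * psi c g (U - S))"
    define H where "H = (\<lambda>S. gsign S (D - S) * f S * g (D - S))"
    have L: "psi c (gmult f g) U = (\<Sum>S\<in>Pow D. F S + F (insert 1 S) + (if odd (card D) then c * H S else 0))"
    proof -
      have "psi c (gmult f g) U = (\<Sum>S\<in>Pow U. F S) + (if odd (card D) then c * (\<Sum>S\<in>Pow D. H S) else 0)"
      proof -
        have "psi c (gmult f g) U = gmult f g U + (if odd (card D) then c * gmult f g D else 0)"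
        proof -
          have eD: "U - {1} = D" by (simp add: D_def)
          have ev: "even (card U) \<longleftrightarrow> odd (card D)" using cardU by simp
          have t: "1 \<in> U \<and> finite U" using True by simp
          show ?thesis unfolding psi_def eD ev using t by (simp only: simp_thms if_True)
        qed
        then show ?thesis by (simp add: gmult_pw[OF f g] F_def H_def)
      qed
      also have "(\<Sum>S\<in>Pow U. F S) = (\<Sum>S\<in>Pow D. F S + F (insert 1 S))"
        unfolding UD by (rule sum_Pow_split[OF finD n1])
      finally show ?thesis by (simp add: sum.distrib sum_distrib_left)
    qed
    have R: "gmult (psi c f) (psi c g) U = (\<Sum>S\<in>Pow D. G S + G (insert 1 S))"
      unfolding gmult_pw[OF pf pg] G_def[symmetric] unfolding UD by (rule sum_Pow_split[OF finD n1])
    have "(\<Sum>S\<in>Pow D. F S + F (insert 1 S) + (if odd (card D) then c * H S else 0)) = (\<Sum>S\<in>Pow D. G S + G (insert 1 S))"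
    proof (rule sum.cong[OF refl])
      fix S assume "S \<in> Pow D"
      then have SD: "S \<subseteq> D" by simp
      define T where "T = D - S"
      have n1S: "1 \<notin> S" and n1T: "1 \<notin> T" using SD n1 by (auto simp: T_def)
      have finS: "finite S" and finT: "finite T" using SD finD finite_subset by (auto simp: T_def)
      have e1: "U - S = insert 1 T" using UD n1S n1 by (auto simp: T_def)
      have e2: "U - insert 1 S = T" using UD n1S n1 by (auto simp: T_def)
      have cD: "card D = card S + card T" unfolding T_def using SD finD
        by (metis card_Diff_subset card_mono le_add_diff_inverse finite_subset)
      have ciT: "card (insert 1 T) = Suc (card T)" using finT n1T by simp
      have ciS: "card (insert 1 S) = Suc (card S)" using finS n1S by simp
      have s1: "gsign S (insert 1 T) * f S = (-1) ^ card S * gsign S T * f S"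
      proof (cases "f S = 0")
        case False
        then have "0 \<notin> S" using grassD[OF f] by blast
        then have "gsign S (insert 1 T) = ((-1) ^ card S * gsign S T :: 'a)"
          using gsign_ins1_right[OF finS _ n1S n1T] by blast
        then show ?thesis by simp
      qed simp
      have s2: "gsign (insert 1 S) T * g T = gsign S T * g T"
      proof (cases "g T = 0")
        case False
        then have "0 \<notin> T" using grassD[OF g] by blast
        then have "gsign (insert 1 S) T = (gsign S T :: 'a)" by (rule gsign_ins1_left)
        then show ?thesis by simp
      qed simp
      have pfS: "psi c f S = f S" using n1S by (simp add: psi_def)
      have pgT: "psi c g T = g T" using n1T by (simp add: psi_def)
      have pgiT: "psi c g (insert 1 T) = g (insert 1 T) + (if odd (card T) then c * g T else 0)"
        using finT n1T ciT by (simp add: psi_def)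
      have pfiS: "psi c f (insert 1 S) = f (insert 1 S) + (if odd (card S) then c * f S else 0)"
        using finS n1S ciS by (simp add: psi_def)
      have HS: "H S = gsign S T * f S * g T" by (simp only: H_def T_def)
      have FS: "F S = gsign S (insert 1 T) * f S * g (insert 1 T)" by (simp only: F_def e1)
      have FiS: "F (insert 1 S) = gsign (insert 1 S) T * f (insert 1 S) * g T" by (simp only: F_def e2)
      have GS: "G S = gsign S (insert 1 T) * f S * (g (insert 1 T) + (if odd (card T) then c * g T else 0))"
        by (simp only: G_def e1 pfS pgiT)
      have GiS: "G (insert 1 S) = gsign (insert 1 S) T * (f (insert 1 S) + (if odd (card S) then c * f S else 0)) * g T"
        by (simp only: G_def e2 pfiS pgT)
      have X: "gsign S (insert 1 T) * f S * (if odd (card T) then c * g T else 0)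
          + gsign (insert 1 S) T * (if odd (card S) then c * f S else 0) * g T
          = (if odd (card D) then c * H S else 0)"
      proof -
        have A: "gsign S (insert 1 T) * f S * (if odd (card T) then c * g T else 0)
           = (if odd (card T) then (-1) ^ card S * c * (gsign S T * f S * g T) else 0)"
          unfolding s1 by (simp add: algebra_simps)
        have B: "gsign (insert 1 S) T * (if odd (card S) then c * f S else 0) * g T
           = (if odd (card S) then c * (gsign S T * f S * g T) else 0)"
        proof -
          have "gsign (insert 1 S) T * (if odd (card S) then c * f S else 0) * g T
             = (if odd (card S) then c * f S else 0) * (gsign (insert 1 S) T * g T)" by (simp only: ac_simps)
          also have "\<dots> = (if odd (card S) then c * (gsign S T * f S * g T) else 0)"
            unfolding s2 by (simp add: algebra_simps)
          finally show ?thesis .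
        qed
        show ?thesis unfolding A B HS cD by (cases "even (card S)"; cases "even (card T)") auto
      qed
      show "F S + F (insert 1 S) + (if odd (card D) then c * H S else 0) = G S + G (insert 1 S)"
        unfolding FS FiS GS GiS X[symmetric] by (simp add: algebra_simps)
    qed
    with L R show ?thesis by simp
  qed
qed

lemma psi_hom: "grass_hom (psi c)"
proof -
  have "psi c gone = gone"
  proof
    fix U show "psi c gone U = gone U"
    proof (cases "U = {1}")
      case True then show ?thesis by (simp add: psi_def gone_def)
    next
      case False
      then have "\<not> (1 \<in> U \<and> U - {1} = {})" by auto
      then show ?thesis by (auto simp: psi_def gone_def)
    qed
  qed
  moreover have "psi c (gadd f g) = gadd (psi c f) (psi c g)" for f g
    by (auto simp: psi_def gadd_def algebra_simps)
  moreover have "psi c (gscale d f) = gscale d (psi c f)" for d f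
    by (auto simp: psi_def gscale_def algebra_simps)
  ultimately show ?thesis
    by (simp add: grass_hom_def psi_grass psi_mult)
qed

lemma psi_inv: "psi c (psi (- c) f) = f"
  by (auto simp: psi_def)

definition theta :: "(nat set \<Rightarrow> 'a::field) \<Rightarrow> nat set \<Rightarrow> 'a" where
  "theta f = (\<lambda>U. (-1) ^ card U * f U)"

lemma theta_inv: "theta (theta f) = f"
  by (auto simp: theta_def simp flip: power_add mult.assoc)

lemma theta_grass: "f \<in> grass \<Longrightarrow> theta f \<in> grass"
  by (auto simp: grass_def theta_def)

lemma theta_mult:
  assumes f: "f \<in> grass" and g: "g \<in> grass"
  shows "theta (gmult f g) = gmult (theta f) (theta g)"
proof
  fix U
  show "theta (gmult f g) U = gmult (theta f) (theta g) U"
  proof (cases "finite U")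
    case False
    then have inf: "infinite (Pow U)" by simp
    have "gmult (theta f) (theta g) U = 0"
      by (simp only: gmult_pw[OF theta_grass[OF f] theta_grass[OF g]] sum.infinite[OF inf])
    moreover have "theta (gmult f g) U = 0"
      unfolding theta_def gmult_pw[OF f g] by (simp only: sum.infinite[OF inf] mult_zero_right)
    ultimately show ?thesis by simp
  next
    case True
    have "theta (gmult f g) U = (\<Sum>S\<in>Pow U. (-1) ^ card U * (gsign S (U - S) * f S * g (U - S)))"
      unfolding theta_def gmult_pw[OF f g] by (simp add: sum_distrib_left)
    also have "\<dots> = (\<Sum>S\<in>Pow U. gsign S (U - S) * theta f S * theta g (U - S))"
    proof (rule sum.cong[OF refl])
      fix S assume "S \<in> Pow U"
      then have "card U = card S + card (U - S)" using True
        by (metis PowD card_Diff_subset card_mono finite_subset le_add_diff_inverse)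
      then show "(-1) ^ card U * (gsign S (U - S) * f S * g (U - S)) = gsign S (U - S) * theta f S * theta g (U - S)"
        by (simp add: theta_def power_add algebra_simps)
    qed
    also have "\<dots> = gmult (theta f) (theta g) U"
      by (rule gmult_pw[OF theta_grass[OF f] theta_grass[OF g], symmetric])
    finally show ?thesis .
  qed
qed

lemma theta_hom: "grass_hom (theta :: (nat set \<Rightarrow> 'a::field) \<Rightarrow> _)"
proof -
  have "theta (gone :: nat set \<Rightarrow> 'a) = gone" by (auto simp: theta_def gone_def)
  moreover have "theta (gadd f g :: nat set \<Rightarrow> 'a) = gadd (theta f) (theta g)" for f g
    by (auto simp: theta_def gadd_def algebra_simps)
  moreover have "theta (gscale d f :: nat set \<Rightarrow> 'a) = gscale d (theta f)" for d f
    by (auto simp: theta_def gscale_def algebra_simps)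
  ultimately show ?thesis
    by (simp add: grass_hom_def theta_grass theta_mult)
qed

lemma hom_comp: "grass_hom a \<Longrightarrow> grass_hom b \<Longrightarrow> grass_hom (\<lambda>f. a (b f))"
  unfolding grass_hom_def by auto

definition gmono :: "nat set \<Rightarrow> nat set \<Rightarrow> 'a::field" where
  "gmono A = (\<lambda>U. if U = A then 1 else 0)"

lemma gmono_grass: "finite A \<Longrightarrow> 0 \<notin> A \<Longrightarrow> gmono A \<in> grass"
  by (auto simp: grass_def gmono_def)

lemma gmult_gmono:
  assumes "finite A" "0 \<notin> A" "finite B" "0 \<notin> B"
  shows "gmult (gmono A) (gmono B) U = (if A \<inter> B = {} \<and> U = A \<union> B then gsign A B else (0::'a::field))"
proof (cases "finite U")
  case False
  then have inf: "infinite (Pow U)" by simp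
  have "gmult (gmono A) (gmono B) U = (0::'a)"
    by (simp only: gmult_pw[OF gmono_grass[OF assms(1,2)] gmono_grass[OF assms(3,4)]] sum.infinite[OF inf])
  then show ?thesis using False assms by auto
next
  case True
  have "gmult (gmono A) (gmono B) U = (\<Sum>S\<in>Pow U. if S = A then (gsign A (U - A) * (if U - A = B then 1 else 0)) else (0::'a))"
    unfolding gmult_pw[OF gmono_grass[OF assms(1,2)] gmono_grass[OF assms(3,4)]]
    by (rule sum.cong[OF refl]) (auto simp: gmono_def)
  also have "\<dots> = (if A \<subseteq> U then gsign A (U - A) * (if U - A = B then 1 else 0) else 0)"
    using True by simp
  also have "\<dots> = (if A \<inter> B = {} \<and> U = A \<union> B then gsign A B else 0)"
    by (auto simp: Un_Diff_disj)
  finally show ?thesis .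
qed

lemma gen_gmono: "gen n = gmono {n}" by (simp add: gen_def gmono_def)
lemma gone_gmono: "gone = gmono {}" by (simp add: gone_def gmono_def)

lemma gmono_insert:
  assumes "finite A" "0 \<notin> A" "0 < b" "\<forall>a\<in>A. b < a"
  shows "gmono (insert b A) = (gmult (gen b) (gmono A) :: nat set \<Rightarrow> 'a::field)"
proof
  fix U
  have bA: "b \<notin> A" using assms(4) by auto
  have sg: "gsign {b} A = (1::'a)"
  proof -
    have e: "{(s, t). s \<in> {b} \<and> t \<in> A \<and> t < s} = {}" using assms(4) by auto
    show ?thesis unfolding gsign_def e by simp
  qed
  show "gmono (insert b A) U = (gmult (gen b) (gmono A) :: nat set \<Rightarrow> 'a) U"
  proof -
    have b0: "0 \<notin> {b}" using assms(3) by simp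
    show ?thesis
      unfolding gen_gmono gmult_gmono[OF finite.intros(2)[OF finite.intros(1)] b0 assms(1,2)]
      using bA sg by (auto simp: gmono_def)
  qed
qed

lemma gscale_grass: "f \<in> grass \<Longrightarrow> gscale c f \<in> grass"
  unfolding grass_def gscale_def
  by (auto elim!: finite_subset[rotated])

lemma upd_grass: "f \<in> grass \<Longrightarrow> f(S := 0) \<in> grass"
  unfolding grass_def by (auto elim!: finite_subset[rotated])

lemma gone_grass: "gone \<in> grass"
  by (simp add: gone_gmono gmono_grass)

lemma hom_unique:
  assumes a: "grass_hom a" and b: "grass_hom b"
    and gens: "\<And>n. 0 < n \<Longrightarrow> a (gen n) = b (gen n)" and f: "f \<in> grass"
  shows "a f = b f"
proof -
  have ha: "\<And>x y. x \<in> grass \<Longrightarrow> y \<in> grass \<Longrightarrow> a (gmult x y) = gmult (a x) (a y)"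
    "\<And>x y. x \<in> grass \<Longrightarrow> y \<in> grass \<Longrightarrow> a (gadd x y) = gadd (a x) (a y)"
    "\<And>c x. x \<in> grass \<Longrightarrow> a (gscale c x) = gscale c (a x)" "a gone = gone"
    using a unfolding grass_hom_def by auto
  have hb: "\<And>x y. x \<in> grass \<Longrightarrow> y \<in> grass \<Longrightarrow> b (gmult x y) = gmult (b x) (b y)"
    "\<And>x y. x \<in> grass \<Longrightarrow> y \<in> grass \<Longrightarrow> b (gadd x y) = gadd (b x) (b y)"
    "\<And>c x. x \<in> grass \<Longrightarrow> b (gscale c x) = gscale c (b x)" "b gone = gone"
    using b unfolding grass_hom_def by auto
  have mono: "0 \<notin> A \<longrightarrow> a (gmono A) = b (gmono A)" if "finite A" for A
    using that
  proof (induction A rule: finite_linorder_min_induct)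
    case empty
    then show ?case using ha(4) hb(4) by (simp add: gone_gmono)
  next
    case (insert x A)
    show ?case
    proof
      assume "0 \<notin> insert x A"
      then have x0: "0 < x" and A0: "0 \<notin> A" by auto
      have eq: "gmono (insert x A) = gmult (gen x) (gmono A)"
        by (rule gmono_insert) (use insert x0 A0 in auto)
      have g1: "gen x \<in> grass" using x0 by (simp add: gen_gmono gmono_grass)
      have g2: "gmono A \<in> grass" using insert A0 by (simp add: gmono_grass)
      show "a (gmono (insert x A)) = b (gmono (insert x A))"
        unfolding eq ha(1)[OF g1 g2] hb(1)[OF g1 g2] gens[OF x0] using insert A0 by simp
    qed
  qed
  have main: "\<forall>f. f \<in> grass \<longrightarrow> {S. f S \<noteq> 0} = X \<longrightarrow> a f = b f" if "finite X" for X
    using that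
  proof (induction X rule: finite_induct)
    case empty
    show ?case
    proof (intro allI impI)
      fix f :: "nat set \<Rightarrow> 'a" assume "f \<in> grass" "{S. f S \<noteq> 0} = {}"
      then have "f = gscale 0 gone" by (auto simp: gscale_def)
      then show "a f = b f" using ha(3)[OF gone_grass] hb(3)[OF gone_grass] ha(4) hb(4) by simp
    qed
  next
    case (insert S X)
    show ?case
    proof (intro allI impI)
      fix f :: "nat set \<Rightarrow> 'a" assume f: "f \<in> grass" and sup: "{S. f S \<noteq> 0} = insert S X"
      have fS: "f S \<noteq> 0" using sup by auto
      then have S: "finite S" "0 \<notin> S" using grassD[OF f] by auto
      have m: "gmono S \<in> grass" using S by (rule gmono_grass)
      have f': "f(S := 0) \<in> grass" using f by (rule upd_grass)
      have sup': "{T. (f(S := 0)) T \<noteq> 0} = X" using sup insert.hyps(2) by auto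
      have IH: "a (f(S := 0)) = b (f(S := 0))" using insert.IH f' sup' by blast
      have dec: "f = gadd (gscale (f S) (gmono S)) (f(S := 0))"
        by (auto simp: gadd_def gscale_def gmono_def)
      have A: "a (gadd (gscale (f S) (gmono S)) (f(S := 0))) = b (gadd (gscale (f S) (gmono S)) (f(S := 0)))"
        unfolding ha(2)[OF gscale_grass[OF m] f'] hb(2)[OF gscale_grass[OF m] f'] ha(3)[OF m] hb(3)[OF m]
        using IH mono S by simp
      then show "a f = b f" by (simp only: dec[symmetric])
    qed
  qed
  show ?thesis using main[OF grass_fin[OF f]] f by blast
qed

definition phi0 :: "(nat set \<Rightarrow> 'a::field) \<Rightarrow> nat set \<Rightarrow> 'a" where
  "phi0 f = psi (-1) (theta (psi 1 f))"

lemma phi0_hom: "grass_hom (phi0 :: (nat set \<Rightarrow> 'a::field) \<Rightarrow> _)"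
proof -
  have "grass_hom (\<lambda>f. psi (-1) ((\<lambda>f. theta (psi 1 f)) (f :: nat set \<Rightarrow> 'a)))"
    by (rule hom_comp[OF psi_hom hom_comp[OF theta_hom psi_hom]])
  then show ?thesis unfolding phi0_def[abs_def] by simp
qed

lemma phi0_gen1: "phi0 (gen 1) = (gneg (gen 1) :: nat set \<Rightarrow> 'a::field)"
proof
  fix U :: "nat set"
  have "U - {1} \<noteq> {1}" by auto
  then show "phi0 (gen 1) U = (gneg (gen 1) :: nat set \<Rightarrow> 'a) U"
    by (auto simp: phi0_def psi_def theta_def gen_def gneg_def)
qed

definition two :: "nat \<Rightarrow> 'a::field \<Rightarrow> 'a \<Rightarrow> nat set \<Rightarrow> 'a" where
  "two n a b = (\<lambda>U. if U = {n} then a else if U = {1, n} then b else 0)"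

lemma psi_two:
  assumes n: "1 < n"
  shows "psi c (two n a b) = two n a (b + c * a)"
proof
  fix U :: "nat set"
  consider "U = {n}" | "U = {1, n}" | "U \<noteq> {n}" "U \<noteq> {1, n}" by blast
  then show "psi c (two n a b) U = two n a (b + c * a) U"
  proof cases
    case 1
    then have "1 \<notin> U" using n by auto
    then show ?thesis using 1 by (simp add: psi_def two_def)
  next
    case 2
    have "1 \<in> U" "finite U" "card U = 2" "U - {1} = {n}" "U \<noteq> {n}" using 2 n by auto
    then show ?thesis using 2 by (simp add: psi_def two_def)
  next
    case 3
    have "U - {1} \<noteq> {1, n}" by auto
    moreover have "1 \<in> U \<Longrightarrow> U - {1} \<noteq> {n}" using 3 by auto
    ultimately have "(if 1 \<in> U \<and> finite U \<and> even (card U) then c * two n a b (U - {1}) else 0) = 0"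
      by (auto simp: two_def)
    then have "psi c (two n a b) U = two n a b U"
      unfolding psi_def by (simp only: add_0_right)
    then show ?thesis using 3 by (simp add: two_def)
  qed
qed

lemma theta_two:
  assumes n: "1 < n"
  shows "theta (two n a b) = two n (- a) b"
proof
  fix U :: "nat set"
  have "card {1, n} = 2" using n by simp
  then show "theta (two n a b) U = two n (- a) b U"
    by (auto simp: theta_def two_def)
qed

lemma phi0_genn:
  assumes n: "1 < n"
  shows "phi0 (gen n) = (gadd (gneg (gen n)) (gscale 2 (gmult (gen 1) (gen n))) :: nat set \<Rightarrow> 'a::field_char_0)"
proof -
  have m: "gmult (gen 1) (gen n) = (gmono {1, n} :: nat set \<Rightarrow> 'a)"
  proof -
    have "gmono (insert 1 {n}) = (gmult (gen 1) (gmono {n}) :: nat set \<Rightarrow> 'a)"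
      by (rule gmono_insert) (use n in auto)
    then show ?thesis unfolding gen_gmono[of n] by (rule sym)
  qed
  have g: "gen n = (two n 1 0 :: nat set \<Rightarrow> 'a)" by (auto simp: gen_def two_def fun_eq_iff)
  have r: "gadd (gneg (gen n)) (gscale 2 (gmono {1, n})) = (two n (-1) 2 :: nat set \<Rightarrow> 'a)"
    using n by (auto simp: gen_def two_def fun_eq_iff gadd_def gneg_def gscale_def gmono_def)
  have "phi0 (gen n) = (two n (-1) 2 :: nat set \<Rightarrow> 'a)"
    unfolding phi0_def g psi_two[OF n] theta_two[OF n] by simp
  then show ?thesis unfolding m r .
qed

lemma neg_eq_self: "(-(x::'a::field_char_0) = x) \<longleftrightarrow> x = 0"
proof
  assume a: "-x = x"
  have "x + x = 0" using a by (metis add.right_inverse)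
  then have "2 * x = 0" by (simp only: mult_2)
  then show "x = 0" by simp
qed simp

lemma pow_eq_self: "((-1) ^ card U * (x::'a::field_char_0) = x) \<longleftrightarrow> (odd (card U) \<longrightarrow> x = 0)"
proof (cases "even (card U)")
  case True then show ?thesis by simp
next
  case False then show ?thesis by (simp add: neg_eq_self)
qed

lemma pow_eq_neg: "((-1) ^ card U * (x::'a::field_char_0) = - x) \<longleftrightarrow> (even (card U) \<longrightarrow> x = 0)"
proof (cases "even (card U)")
  case True
  have "(x = - x) \<longleftrightarrow> x = 0" using neg_eq_self[of x] by auto
  then show ?thesis using True by simp
next
  case False then show ?thesis by simp
qed

lemma theta_Ecan0:
  fixes g :: "nat set \<Rightarrow> 'a::field_char_0"
  assumes "g \<in> grass" shows "theta g = g \<longleftrightarrow> g \<in> Ecan0"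
proof -
  have "theta g = g \<longleftrightarrow> (\<forall>U. (-1) ^ card U * g U = g U)" by (simp add: theta_def fun_eq_iff)
  also have "\<dots> \<longleftrightarrow> (\<forall>U. odd (card U) \<longrightarrow> g U = 0)" by (simp only: pow_eq_self)
  also have "\<dots> \<longleftrightarrow> g \<in> Ecan0" using assms by (auto simp: Ecan0_def)
  finally show ?thesis .
qed

lemma theta_Ecan1:
  fixes g :: "nat set \<Rightarrow> 'a::field_char_0"
  assumes "g \<in> grass" shows "theta g = gneg g \<longleftrightarrow> g \<in> Ecan1"
proof -
  have "theta g = gneg g \<longleftrightarrow> (\<forall>U. (-1) ^ card U * g U = - g U)" by (simp add: theta_def gneg_def fun_eq_iff)
  also have "\<dots> \<longleftrightarrow> (\<forall>U. even (card U) \<longrightarrow> g U = 0)" by (simp only: pow_eq_neg)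
  also have "\<dots> \<longleftrightarrow> g \<in> Ecan1" using assms by (auto simp: Ecan1_def)
  finally show ?thesis .
qed

lemma psi_gneg: "psi c (gneg f) = gneg (psi c f)"
  by (auto simp: psi_def gneg_def)

lemma theta_gneg: "theta (gneg f) = gneg (theta f)"
  by (auto simp: theta_def gneg_def)

theorem mainTheorem10:
  fixes \<phi> :: "(nat set \<Rightarrow> 'a::field_char_0) \<Rightarrow> (nat set \<Rightarrow> 'a)"
  assumes hom: "grass_hom \<phi>"
    and e1: "\<phi> (gen 1) = gneg (gen 1)"
    and en: "\<And>n. n > 1 \<Longrightarrow> \<phi> (gen n) = gadd (gneg (gen n)) (gscale 2 (gmult (gen 1) (gen n)))"
  shows "bij_betw \<phi> grass grass
         \<and> (\<forall>f\<in>grass. \<phi> (\<phi> f) = f) \<and> (\<exists>f\<in>grass. \<phi> f \<noteq> f)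
         \<and> (\<exists>\<psi>. grass_hom \<psi> \<and> bij_betw \<psi> grass grass
                \<and> \<psi> ` Ephi0 \<phi> = Ecan0 \<and> \<psi> ` Ephi1 \<phi> = Ecan1)"
proof -
  have gens: "\<phi> (gen n) = phi0 (gen n)" if "0 < n" for n
  proof (cases "n = 1")
    case True then show ?thesis using e1 phi0_gen1[where 'a='a] by simp
  next
    case False
    then have "1 < n" using that by simp
    then show ?thesis using en phi0_genn[where 'a='a] by simp
  qed
  have eq: "\<phi> f = phi0 f" if "f \<in> grass" for f
    by (rule hom_unique[OF hom phi0_hom gens that])
  have cl: "\<phi> f \<in> grass" if "f \<in> grass" for f using hom that unfolding grass_hom_def by blast
  have psi_inv': "psi (-1) (psi 1 f) = f" for f :: "nat set \<Rightarrow> 'a"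
    using psi_inv[of "-1" f] by simp
  have psi_inv1: "psi 1 (psi (-1) f) = f" for f :: "nat set \<Rightarrow> 'a"
    using psi_inv[of 1 f] by simp
  have phi0_inv: "phi0 (phi0 f) = f" for f :: "nat set \<Rightarrow> 'a"
    unfolding phi0_def psi_inv1 theta_inv psi_inv' ..
  have invol: "\<forall>f\<in>grass. \<phi> (\<phi> f) = f"
    using eq cl phi0_inv by simp
  have bij: "bij_betw \<phi> grass grass"
    by (rule bij_betw_byWitness[where f' = \<phi>]) (use invol cl in auto)
  have ex: "\<exists>f\<in>grass. \<phi> f \<noteq> f"
  proof
    show "gen 1 \<in> grass" by (simp add: gen_gmono gmono_grass)
    have "gneg (gen 1) {1} \<noteq> (gen 1 {1} :: 'a)" by (simp add: gneg_def gen_def)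
    then show "\<phi> (gen 1) \<noteq> gen 1" using e1 by auto
  qed
  have pg: "\<And>f. f \<in> grass \<Longrightarrow> psi c f \<in> grass" for c :: 'a by (rule psi_grass)
  have bij2: "bij_betw (psi (1::'a)) grass grass"
    by (rule bij_betw_byWitness[where f' = "psi (-1)"]) (use psi_inv' psi_inv1 pg in auto)
  have E0: "psi 1 ` Ephi0 \<phi> = Ecan0"
  proof
    show "psi 1 ` Ephi0 \<phi> \<subseteq> Ecan0"
    proof
      fix g assume "g \<in> psi 1 ` Ephi0 \<phi>"
      then obtain f where f: "f \<in> grass" "\<phi> f = f" and g: "g = psi 1 f" by (auto simp: Ephi0_def)
      have "psi (-1) (theta (psi 1 f)) = f" using f eq unfolding phi0_def by simp
      then have "psi 1 (psi (-1) (theta (psi 1 f))) = psi 1 f" by simp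
      then have "theta g = g" unfolding g psi_inv1 .
      then show "g \<in> Ecan0" using theta_Ecan0 pg f g by blast
    qed
  next
    show "Ecan0 \<subseteq> psi 1 ` Ephi0 \<phi>"
    proof
      fix g :: "nat set \<Rightarrow> 'a" assume gE: "g \<in> Ecan0"
      then have gg: "g \<in> grass" by (simp add: Ecan0_def)
      then have th: "theta g = g" using theta_Ecan0 gE by blast
      define f where "f = psi (-1) g"
      have fg: "f \<in> grass" unfolding f_def using pg gg by blast
      have "phi0 f = f" unfolding phi0_def f_def psi_inv1 th ..
      then have "\<phi> f = f" using eq[OF fg] by simp
      then have "f \<in> Ephi0 \<phi>" using fg by (simp add: Ephi0_def)
      moreover have "g = psi 1 f" unfolding f_def psi_inv1 ..
      ultimately show "g \<in> psi 1 ` Ephi0 \<phi>" by blast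
    qed
  qed
  have E1: "psi 1 ` Ephi1 \<phi> = Ecan1"
  proof
    show "psi 1 ` Ephi1 \<phi> \<subseteq> Ecan1"
    proof
      fix g assume "g \<in> psi 1 ` Ephi1 \<phi>"
      then obtain f where f: "f \<in> grass" "\<phi> f = gneg f" and g: "g = psi 1 f" by (auto simp: Ephi1_def)
      have "psi (-1) (theta (psi 1 f)) = gneg f" using f eq unfolding phi0_def by simp
      then have "psi 1 (psi (-1) (theta (psi 1 f))) = psi 1 (gneg f)" by simp
      then have "theta g = gneg g" unfolding g psi_inv1 psi_gneg .
      then show "g \<in> Ecan1" using theta_Ecan1 pg f g by blast
    qed
  next
    show "Ecan1 \<subseteq> psi 1 ` Ephi1 \<phi>"
    proof
      fix g :: "nat set \<Rightarrow> 'a" assume gE: "g \<in> Ecan1"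
      then have gg: "g \<in> grass" by (simp add: Ecan1_def)
      then have th: "theta g = gneg g" using theta_Ecan1 gE by blast
      define f where "f = psi (-1) g"
      have fg: "f \<in> grass" unfolding f_def using pg gg by blast
      have "phi0 f = gneg f" unfolding phi0_def f_def psi_inv1 th psi_gneg ..
      then have "\<phi> f = gneg f" using eq[OF fg] by simp
      then have "f \<in> Ephi1 \<phi>" using fg by (simp add: Ephi1_def)
      moreover have "g = psi 1 f" unfolding f_def psi_inv1 ..
      ultimately show "g \<in> psi 1 ` Ephi1 \<phi>" by blast
    qed
  qed
  show ?thesis using bij invol ex psi_hom bij2 E0 E1 by blast
qed

end
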